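(* Let $r\geqslant 2$, $\ell\geqslant 1$ and $m=2^r(2^\ell+1)$. Then: (i) $L_1(x^{m-1})=x^{2^r-1}+\left(1+\sum_{k=r}^{r+\ell-1}x^{2^k}\right)\sum_{k=0}^{r-1}x^{2^k-1}$; (ii) $x^2\,(L_1(x^{m-1}))'=P_r(x)^2+P_\ell(x)^{2^r}P_{r-1}(x)^2$; (iii) if $\tau$ is a root of $(L_1(x^{m-1}))'$ in $\overline{\mathbb F}_2$, then $P_{r-1}(\tau)\neq 0$; (iv) if $\tau_i,\tau_j$ are distinct roots of $(L_1(x^{m-1}))'$ with $P_\ell(\tau_i+\tau_j)=0$, then $P_{r-1}(\tau_i+\tau_j)\neq 0$ and $$P_\ell(\tau_i)^{2^{r-1}}=\frac{P_r(\tau_i)}{P_{r-1}(\tau_i)}=\frac{P_r(\tau_i+\tau_j)}{P_{r-1}(\tau_i+\tau_j)}=\frac{P_r(\tau_j)}{P_{r-1}(\tau_j)}=P_\ell(\tau_j)^{2^{r-1}}.$$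
   Context: Here $P_0=0$ and, for $k\geqslant 1$, $P_k(x)=x+x^2+\dots+x^{2^{k-1}}$ is the $k$-th trace polynomial over $\mathbb F_2$. For $m\equiv 0\pmod 4$, $L_1(x^{m-1})$ denotes the unique polynomial $Q$ of degree at most $(m-2)/2$ over $\mathbb F_2$ with $Q(x(x+1))=(x+1)^{m-1}+x^{m-1}$. *)

theory Defs
  imports "HOL-Library.Z2" "HOL-Computational_Algebra.Polynomial" "HOL-Algebra.Algebraic_Closure_Type"
begin

definition trP :: "nat \<Rightarrow> 'a::comm_semiring_1 poly" where
  "trP k = (\<Sum>i<k. monom 1 (2 ^ i))"

text \<open>L_1(x^(m-1)) over F_2: the unique Q with deg Q <= (m-2)/2 and
  Q(x(x+1)) = (x+1)^(m-1) + x^(m-1).\<close>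
definition L1 :: "nat \<Rightarrow> bit poly" where
  "L1 m = (THE Q. degree Q \<le> (m - 2) div 2 \<and>
     pcompose Q [:0, 1, 1:] = [:1, 1:] ^ (m - 1) + [:0, 1:] ^ (m - 1))"

end

theory Submission
  imports Defs
begin


lemma c2_add_self: fixes x :: "'a::comm_ring_1" assumes "(2::'a) = 0" shows "x + x = 0"
proof -
  have "x + x = 2 * x" by simp
  thus ?thesis using assms by simp
qed

lemma c2_neg: fixes x :: "'a::comm_ring_1" assumes "(2::'a) = 0" shows "- x = x"
  using c2_add_self[OF assms, of x] by (simp add: add_eq_0_iff2 eq_neg_iff_add_eq_0)

lemma c2_sq: fixes x :: "'a::comm_ring_1" assumes "(2::'a) = 0" shows "(x + y)^2 = x^2 + y^2"
proof -
  have "(x + y)^2 = x^2 + y^2 + 2 * (x * y)" by (simp add: power2_eq_square algebra_simps)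
  thus ?thesis using assms by simp
qed

lemma c2_pow: fixes x :: "'a::comm_ring_1" assumes "(2::'a) = 0"
  shows "(x + y)^(2^k) = x^(2^k) + y^(2^k)"
proof (induction k)
  case 0 then show ?case by simp
next
  case (Suc k)
  have "(x + y)^(2^Suc k) = ((x+y)^(2^k))^2" by (simp add: power_mult[symmetric] mult.commute)
  also have "\<dots> = (x^(2^k))^2 + (y^(2^k))^2" using Suc c2_sq[OF assms] by simp
  also have "\<dots> = x^(2^Suc k) + y^(2^Suc k)" by (simp add: power_mult[symmetric] mult.commute)
  finally show ?case .
qed

lemma c2_pow_sum: fixes f :: "'b \<Rightarrow> 'a::comm_ring_1" assumes "(2::'a) = 0" "finite A"
  shows "(\<Sum>i\<in>A. f i)^(2^k) = (\<Sum>i\<in>A. f i ^ (2^k))"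
  using assms(2) by (induction A rule: finite_induct) (simp_all add: c2_pow[OF assms(1)] power_0_left)

lemma c2_pow_inj: fixes x :: "'a::idom" assumes "(2::'a) = 0" "x^(2^k) = y^(2^k)" shows "x = y"
proof -
  have "(x + y)^(2^k) = 0" using c2_pow[OF assms(1)] assms(2) c2_add_self[OF assms(1)] by metis
  hence "x + y = 0" by simp
  thus ?thesis using c2_neg[OF assms(1)] by (metis add_eq_0_iff2)
qed

lemma c2_tele: fixes f :: "nat \<Rightarrow> 'a::comm_ring_1" assumes "(2::'a) = 0"
  shows "(\<Sum>k<n. f k + f (Suc k)) = f 0 + f n"
proof (induction n)
  case 0 then show ?case using c2_add_self[OF assms] by simp
next
  case (Suc n)
  have "(\<Sum>k<Suc n. f k + f (Suc k)) = f 0 + (f n + f n) + f (Suc n)" using Suc by (simp add: algebra_simps)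
  thus ?case using c2_add_self[OF assms] by simp
qed

lemma two_bitpoly: "(2::bit poly) = 0"
  by (metis bit_2_eq_0 of_nat_numeral of_nat_poly pCons_0_0)

lemma two_ac: "(2::bit alg_closure) = 0"
  by (metis bit_2_eq_0 to_ac_0 to_ac_numeral)

lemma monom1: "monom (1::'a::comm_semiring_1) n = [:0,1:]^n"
  by (simp add: monom_altdef)

lemma pcompose_pow: "pcompose (p ^ n) q = (pcompose p q) ^ n"
  by (induction n) (simp_all add: pcompose_mult pcompose_1)

lemma pcompose_X: "pcompose [:0,1:] (q::'a::comm_semiring_1 poly) = q"
  by (simp add: pcompose_pCons)

lemma Y_eq: "[:0,1,1:] = [:0,1:] + ([:0,1:]::'a::comm_ring_1 poly)^2"
  by (simp add: power2_eq_square)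

lemma sum_shift: fixes g :: "nat \<Rightarrow> 'a::comm_monoid_add" and l :: nat shows "(\<Sum>k\<in>{r..<r+l}. g k) = (\<Sum>i<l. g (r + i))"
  by (induction l) simp_all

lemma ident1: fixes a :: "'a::comm_ring_1" assumes "(2::'a) = 0"
  shows "a + a^2 + (1+a+b)*(x+a) = x*((b+1)*(a+1)) + (x+1)*(b*a)"
proof -
  have "a + a^2 + (1+a+b)*(x+a) = x*((b+1)*(a+1)) + (x+1)*(b*a) + 2*(a + a^2 - x*a*b)"
    by (simp add: algebra_simps power2_eq_square)
  thus ?thesis using assms by simp
qed

lemma part1_comp:
  fixes r l :: nat assumes "r \<ge> 1"
  shows "pcompose (monom 1 (2 ^ r - 1) +
       (1 + (\<Sum>k\<in>{r..<r + l}. monom 1 (2 ^ k))) * (\<Sum>k<r. monom 1 (2 ^ k - 1))) [:0,1,1:]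
     = [:1,1:]^(2^r*(2^l+1)-1) + ([:0,1:]::bit poly)^(2^r*(2^l+1)-1)"
    (is "pcompose ?Q ?yy = ?R")
proof -
  define xx :: "bit poly" where "xx = [:0,1:]"
  define yy :: "bit poly" where "yy = [:0,1,1:]"
  define mm :: nat where "mm = 2^r"
  define nn :: nat where "nn = 2^(r+l)"
  have mNM: "2^r*(2^l+1) = nn + mm" unfolding nn_def mm_def by (simp add: power_add algebra_simps)
  have Ypow: "yy^(2^k) = xx^(2^k) + xx^(2^Suc k)" for k
  proof -
    have "yy^(2^k) = xx^(2^k) + (xx^2)^(2^k)" unfolding yy_def xx_def
      by (subst Y_eq) (rule c2_pow[OF two_bitpoly])
    thus ?thesis by (simp add: power_mult[symmetric])
  qed
  have comp: "pcompose ?Q ?yy = yy^(mm-1) + (1 + (\<Sum>k\<in>{r..<r + l}. yy^(2^k))) * (\<Sum>k<r. yy^(2^k-1))"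
    unfolding yy_def mm_def
    by (simp add: monom1 pcompose_add pcompose_mult pcompose_sum pcompose_pow pcompose_X pcompose_1)
  have YpM: "yy * yy^(n-1) = yy^n" if "n \<ge> 1" for n
    using that by (metis Suc_diff_le diff_Suc_1 power_Suc)
  have s1: "yy * (\<Sum>k<r. yy^(2^k-1)) = xx + xx^mm"
  proof -
    have "yy * (\<Sum>k<r. yy^(2^k-1)) = (\<Sum>k<r. yy^(2^k))"
      unfolding sum_distrib_left by (intro sum.cong refl YpM) simp
    also have "\<dots> = (\<Sum>k<r. xx^(2^k) + xx^(2^Suc k))" by (simp add: Ypow)
    also have "\<dots> = xx + xx^mm" using c2_tele[OF two_bitpoly, of "\<lambda>k. xx^(2^k)" r] by (simp add: mm_def)
    finally show ?thesis .
  qed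
  have s2: "(\<Sum>k\<in>{r..<r + l}. yy^(2^k)) = xx^mm + xx^nn"
  proof -
    have "(\<Sum>k\<in>{r..<r + l}. yy^(2^k)) = (\<Sum>i<l. xx^(2^(r+i)) + xx^(2^(r + Suc i)))"
      by (simp add: sum_shift Ypow)
    also have "\<dots> = xx^mm + xx^nn" using c2_tele[OF two_bitpoly, of "\<lambda>i. xx^(2^(r+i))" l] by (simp add: mm_def nn_def)
    finally show ?thesis .
  qed
  have s3: "yy * yy^(mm-1) = xx^mm + (xx^mm)^2"
  proof -
    have "yy * yy^(mm-1) = yy^mm" using YpM by (simp add: mm_def)
    also have "\<dots> = xx^mm + xx^(2^Suc r)" by (simp add: mm_def Ypow)
    also have "\<dots> = xx^mm + (xx^mm)^2" by (simp add: mm_def power_mult[symmetric] mult.commute)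
    finally show ?thesis .
  qed
  have LHS: "yy * pcompose ?Q ?yy = xx^mm + (xx^mm)^2 + (1 + xx^mm + xx^nn) * (xx + xx^mm)"
  proof -
    have "yy * pcompose ?Q ?yy = yy * yy^(mm-1) + (1 + (\<Sum>k\<in>{r..<r + l}. yy^(2^k))) * (yy * (\<Sum>k<r. yy^(2^k-1)))"
      unfolding comp by (simp only: algebra_simps)
    thus ?thesis unfolding s1 s2 s3 by (simp add: add.assoc)
  qed
  have xx1: "[:1,1:] = xx + 1" unfolding xx_def by (rule poly_eqI) (simp add: coeff_pCons split: nat.split)
  have m1: "nn + mm - 1 \<ge> 0" by simp
  have NMpos: "nn + mm \<ge> 1" unfolding mm_def using one_le_power[of "2::nat" r] by linarith
  have xx1pow: "(xx+1)^(nn+mm) = (xx^nn + 1) * (xx^mm + 1)"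
  proof -
    have a: "(xx+1)^nn = xx^nn+1" unfolding nn_def using c2_pow[OF two_bitpoly, of xx 1 "r+l"] by simp
    have b: "(xx+1)^mm = xx^mm+1" unfolding mm_def using c2_pow[OF two_bitpoly, of xx 1 "r"] by simp
    show ?thesis by (simp only: power_add a b)
  qed
  have RHS: "yy * ?R = xx*((xx^nn+1)*(xx^mm+1)) + (xx+1)*(xx^nn*xx^mm)"
  proof -
    have "yy * ?R = xx * ((xx+1) * (xx+1)^(nn+mm-1)) + (xx+1) * (xx * xx^(nn+mm-1))"
      unfolding mNM xx1 by (simp add: yy_def xx_def algebra_simps)
    also have "\<dots> = xx * (xx+1)^(nn+mm) + (xx+1) * xx^(nn+mm)"
      using NMpos by (metis Suc_diff_le diff_Suc_1 power_Suc)
    also have "\<dots> = xx*((xx^nn+1)*(xx^mm+1)) + (xx+1)*(xx^nn*xx^mm)" by (subst xx1pow) (simp add: power_add)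
    finally show ?thesis .
  qed
  have "yy * pcompose ?Q ?yy = yy * ?R"
    unfolding LHS RHS using ident1[OF two_bitpoly, of "xx^mm" "xx^nn" xx] by (simp add: add.commute)
  moreover have "yy \<noteq> 0" unfolding yy_def by simp
  ultimately show ?thesis by simp
qed

lemma part1_deg:
  fixes r l :: nat assumes "r \<ge> 1"
  shows "degree (monom (1::bit) (2 ^ r - 1) +
       (1 + (\<Sum>k\<in>{r..<r + l}. monom 1 (2 ^ k))) * (\<Sum>k<r. monom 1 (2 ^ k - 1)))
     \<le> (2^r*(2^l+1) - 2) div 2"
proof -
  obtain s where r: "r = Suc s" using assms by (cases r) auto
  have e: "(2^r*(2^l+1) - 2) div 2 = 2^s*2^l + 2^s - (1::nat)"
    unfolding r by (simp add: algebra_simps)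
  have p1: "(1::nat) \<le> 2^s" by simp
  have p2: "(1::nat) \<le> 2^l" by simp
  have d1: "degree (monom (1::bit) (2 ^ r - 1)) \<le> 2^s*2^l + 2^s - 1"
  proof -
    have "2^s \<le> 2^s*(2::nat)^l" using p2 by simp
    hence "2 ^ r - 1 \<le> 2^s*2^l + 2^s - (1::nat)" unfolding r power_Suc by linarith
    thus ?thesis by (meson degree_monom_le le_trans)
  qed
  have dT: "degree (1 + (\<Sum>k\<in>{r..<r + l}. monom (1::bit) (2 ^ k))) \<le> 2^s*2^l"
  proof (rule degree_add_le)
    show "degree (1::bit poly) \<le> 2^s*2^l" by simp
    show "degree (\<Sum>k\<in>{r..<r + l}. monom (1::bit) (2 ^ k)) \<le> 2^s*2^l"
    proof (rule degree_sum_le)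
      fix k assume "k \<in> {r..<r+l}"
      hence "k \<le> s + l" unfolding r by simp
      hence "(2::nat)^k \<le> 2^(s+l)" by (rule power_increasing) simp
      thus "degree (monom (1::bit) (2 ^ k)) \<le> 2^s*2^l" by (simp add: power_add degree_monom_eq)
    qed simp
  qed
  have dS: "degree (\<Sum>k<r. monom (1::bit) (2 ^ k - 1)) \<le> 2^s - 1"
  proof (rule degree_sum_le)
    fix k assume "k \<in> {..<r}"
    hence "k \<le> s" unfolding r by simp
    hence "(2::nat)^k \<le> 2^s" by (rule power_increasing) simp
    hence "(2::nat)^k - 1 \<le> 2^s - 1" by (rule diff_le_mono)
    thus "degree (monom (1::bit) (2 ^ k - 1)) \<le> 2^s - 1" by (meson degree_monom_le le_trans)
  qed simp
  have d2: "degree ((1 + (\<Sum>k\<in>{r..<r + l}. monom (1::bit) (2 ^ k))) * (\<Sum>k<r. monom 1 (2 ^ k - 1)))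
      \<le> 2^s*2^l + 2^s - 1"
    using degree_mult_le[of "1 + (\<Sum>k\<in>{r..<r + l}. monom (1::bit) (2 ^ k))" "\<Sum>k<r. monom 1 (2 ^ k - 1)"] dT dS p1
    by linarith
  show ?thesis unfolding e by (rule degree_add_le[OF d1 d2])
qed

lemma L1_eq:
  fixes r l :: nat assumes "r \<ge> 1"
  shows "L1 (2^r*(2^l+1)) = monom 1 (2 ^ r - 1) +
       (1 + (\<Sum>k\<in>{r..<r + l}. monom 1 (2 ^ k))) * (\<Sum>k<r. monom 1 (2 ^ k - 1))"
  unfolding L1_def
proof (rule the_equality)
  show "degree (monom (1::bit) (2 ^ r - 1) +
       (1 + (\<Sum>k\<in>{r..<r + l}. monom 1 (2 ^ k))) * (\<Sum>k<r. monom 1 (2 ^ k - 1)))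
     \<le> (2^r*(2^l+1) - 2) div 2 \<and> pcompose (monom 1 (2 ^ r - 1) +
       (1 + (\<Sum>k\<in>{r..<r + l}. monom 1 (2 ^ k))) * (\<Sum>k<r. monom 1 (2 ^ k - 1))) [:0,1,1:]
     = [:1,1:]^(2^r*(2^l+1)-1) + ([:0,1:]::bit poly)^(2^r*(2^l+1)-1)"
    using part1_deg[OF assms] part1_comp[OF assms] by blast
next
  fix Q :: "bit poly"
  assume "degree Q \<le> (2^r*(2^l+1) - 2) div 2 \<and>
     pcompose Q [:0, 1, 1:] = [:1, 1:] ^ (2^r*(2^l+1) - 1) + [:0, 1:] ^ (2^r*(2^l+1) - 1)"
  hence "pcompose (Q - (monom 1 (2 ^ r - 1) +
       (1 + (\<Sum>k\<in>{r..<r + l}. monom 1 (2 ^ k))) * (\<Sum>k<r. monom 1 (2 ^ k - 1)))) [:0,1,1:] = 0"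
    using part1_comp[OF assms, of l] by (simp add: pcompose_diff)
  hence "Q - (monom 1 (2 ^ r - 1) +
       (1 + (\<Sum>k\<in>{r..<r + l}. monom 1 (2 ^ k))) * (\<Sum>k<r. monom 1 (2 ^ k - 1))) = 0"
    by (rule pcompose_eq_0) simp
  thus "Q = monom 1 (2 ^ r - 1) +
       (1 + (\<Sum>k\<in>{r..<r + l}. monom 1 (2 ^ k))) * (\<Sum>k<r. monom 1 (2 ^ k - 1))" by simp
qed

lemma pderiv_sum: "pderiv (sum f A) = (\<Sum>x\<in>A. pderiv (f x))"
  using higher_pderiv_sum[of 1 f A] by simp

lemma pd_sq: "pderiv ((p::bit poly)^2) = 0"
proof -
  have "pderiv (p^2) = p * pderiv p + p * pderiv p" by (simp only: power2_eq_square pderiv_mult)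
  thus ?thesis by (simp only: c2_add_self[OF two_bitpoly])
qed

lemma pd_X2k: assumes "k \<ge> 1" shows "pderiv (([:0,1:]::bit poly)^(2^k)) = 0"
proof -
  obtain j where k: "k = Suc j" using assms by (cases k) auto
  have "([:0,1:]::bit poly)^(2^k) = (([:0,1:]::bit poly)^(2^j))^2"
    unfolding k by (simp add: power_mult[symmetric] mult.commute)
  thus ?thesis by (simp only: pd_sq)
qed

lemma pd_odd: assumes "k \<ge> 1"
  shows "([:0,1:]::bit poly)^2 * pderiv (([:0,1:]::bit poly)^(2^k - 1)) = [:0,1:]^(2^k)"
proof -
  define x :: "bit poly" where "x = [:0,1:]"
  define D where "D = pderiv (x^(2^k-1))"
  define E where "E = x^(2^k-1)"
  have s: "Suc (2^k - 1) = (2::nat)^k" using one_le_power[of "2::nat" k] by linarith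
  have "x * E = x^(Suc (2^k-1))" unfolding E_def by (simp only: power_Suc)
  also have "\<dots> = x^(2^k)" by (simp only: s)
  finally have e: "x^(2^k) = x * E" by (rule sym)
  have px: "pderiv x = 1" unfolding x_def by (simp add: pderiv_pCons one_pCons)
  have "0 = pderiv (x^(2^k))" using pd_X2k[OF assms] unfolding x_def by (rule sym)
  also have "\<dots> = x * D + E" unfolding e pderiv_mult px D_def E_def by (simp only: mult_1_right)
  finally have "x * D + E = 0" by (rule sym)
  hence "x * D = - E" by (rule add_eq_0_iff2[THEN iffD1])
  hence xd: "x * D = E" by (simp only: c2_neg[OF two_bitpoly])
  have "x^2 * D = x * (x * D)" by (simp only: power2_eq_square mult.assoc)
  also have "\<dots> = x^(2^k)" unfolding xd e ..
  finally show ?thesis unfolding x_def D_def .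
qed

lemma trP_X: "trP k = (\<Sum>i<k. ([:0,1:]::'a::comm_semiring_1 poly)^(2^i))"
  unfolding trP_def by (simp add: monom1)

lemma part2:
  fixes r l :: nat assumes "r \<ge> 1"
  shows "monom 1 2 * pderiv (monom 1 (2 ^ r - 1) +
       (1 + (\<Sum>k\<in>{r..<r + l}. monom 1 (2 ^ k))) * (\<Sum>k<r. monom 1 (2 ^ k - 1)))
     = trP r ^ 2 + trP l ^ (2 ^ r) * (trP (r - 1) ^ 2 :: bit poly)"
proof -
  obtain s where r: "r = Suc s" using assms by (cases r) auto
  define x :: "bit poly" where "x = [:0,1:]"
  define T where "T = (\<Sum>k\<in>{r..<r + l}. x^(2^k))"
  define S where "S = (\<Sum>k<r. x^(2^k-1))"
  define A where "A = (\<Sum>i<s. x^(2^Suc i))"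
  have Q: "monom 1 (2 ^ r - 1) + (1 + (\<Sum>k\<in>{r..<r + l}. monom 1 (2 ^ k))) * (\<Sum>k<r. monom 1 (2 ^ k - 1))
      = x^(2^r-1) + (1 + T) * S" unfolding T_def S_def x_def by (simp add: monom1)
  have dT: "pderiv (1 + T) = 0" unfolding T_def
    by (simp add: pderiv_add pderiv_sum x_def pd_X2k r)
  have dS: "x^2 * pderiv S = A"
  proof -
    have "x^2 * pderiv S = (\<Sum>k<r. x^2 * pderiv (x^(2^k-1)))"
      unfolding S_def by (simp add: pderiv_sum sum_distrib_left)
    also have "\<dots> = (\<Sum>k<s. x^2 * pderiv (x^(2^Suc k-1)))"
      unfolding r sum.lessThan_Suc_shift by simp
    also have "\<dots> = A" unfolding A_def x_def by (intro sum.cong refl pd_odd) simp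
    finally show ?thesis .
  qed
  have d1: "x^2 * pderiv (x^(2^r-1)) = x^(2^r)" unfolding x_def using assms by (rule pd_odd)
  have lhs: "monom 1 2 * pderiv (x^(2^r-1) + (1 + T) * S) = x^(2^r) + (1 + T) * A"
  proof -
    have "monom 1 2 * pderiv (x^(2^r-1) + (1 + T) * S) = x^2 * pderiv (x^(2^r-1)) + (1+T) * (x^2 * pderiv S)"
      using dT by (simp add: pderiv_add pderiv_mult monom1 x_def algebra_simps)
    thus ?thesis unfolding d1 dS .
  qed
  have tr1: "trP (r-1) ^ 2 = A"
    unfolding r A_def trP_X x_def using c2_pow_sum[OF two_bitpoly, of "{..<s}" "\<lambda>i. ([:0,1:]::bit poly)^(2^i)" 1]
    by (simp add: power_mult[symmetric] mult.commute)
  have tr2: "trP r ^ 2 = A + x^(2^r)"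
    unfolding r A_def trP_X x_def using c2_pow_sum[OF two_bitpoly, of "{..<Suc s}" "\<lambda>i. ([:0,1:]::bit poly)^(2^i)" 1]
    by (simp add: power_mult[symmetric] mult.commute)
  have tr3: "trP l ^ (2^r) = T"
  proof -
    have "trP l ^ (2^r) = (\<Sum>i<l. x^(2^(r+i)))"
      unfolding trP_X x_def using c2_pow_sum[OF two_bitpoly, of "{..<l}" "\<lambda>i. ([:0,1:]::bit poly)^(2^i)" r]
      by (simp add: power_mult[symmetric] power_add mult.commute)
    thus ?thesis unfolding T_def sum_shift .
  qed
  show ?thesis unfolding Q lhs tr1 tr2 tr3 by (simp add: algebra_simps)
qed

lemma mp_add: "map_poly to_ac (p + q) = map_poly to_ac p + map_poly (to_ac::'a::field \<Rightarrow> _) q"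
  by (rule poly_eqI) (simp add: coeff_map_poly)

lemma mp_mult: "map_poly to_ac (p * q) = map_poly to_ac p * map_poly (to_ac::'a::field \<Rightarrow> _) q"
  by (rule poly_eqI) (simp add: coeff_map_poly coeff_mult to_ac_sum)

lemma mp_pow: "map_poly to_ac (p ^ n) = (map_poly (to_ac::'a::field \<Rightarrow> _) p) ^ n"
  by (induction n) (simp_all add: mp_mult)

lemma mp_trP: "map_poly (to_ac::'a::field \<Rightarrow> _) (trP k) = trP k"
  apply (rule poly_eqI)
  apply (simp add: trP_def coeff_map_poly coeff_sum to_ac_sum coeff_monom if_distrib[of to_ac])
  apply (intro sum.cong refl)
  apply (simp add: to_ac_1 to_ac_0)
  done

lemma mp_monom: "map_poly (to_ac::'a::field \<Rightarrow> _) (monom 1 n) = monom 1 n"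
  by (simp add: map_poly_monom)

lemma poly_trP: "poly (trP k) t = (\<Sum>i<k. t^(2^i))"
  unfolding trP_def by (simp add: poly_sum poly_monom)

lemma trP_add: fixes x :: "'a::comm_ring_1" assumes "(2::'a) = 0"
  shows "poly (trP k) (x+y) = poly (trP k) x + poly (trP k) y"
  by (simp add: poly_trP c2_pow[OF assms] sum.distrib)

lemma trP_Suc: "poly (trP (Suc k)) t = poly (trP k) t + t^(2^k)"
  by (simp add: poly_trP)

lemma root_ratio:
  fixes a :: "'a::field" assumes two: "(2::'a) = 0"
    and eq: "a^2 + c^(2^Suc s) * b^2 = 0" and b: "b \<noteq> 0"
  shows "c^(2^s) = a / b"
proof -
  have "a^2 = - (c^(2^Suc s) * b^2)" using eq by (rule add_eq_0_iff2[THEN iffD1])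
  hence a2: "a^2 = c^(2^Suc s) * b^2" by (simp only: c2_neg[OF two])
  have b2: "b^2 \<noteq> 0" using b by simp
  have "(a/b)^2 = a^2 / b^2" by (rule power_divide)
  also have "\<dots> = c^(2^Suc s)" unfolding a2 using b2 by (rule nonzero_mult_div_cancel_right)
  also have "\<dots> = (c^(2^s))^2" by (simp only: power_Suc2 power_mult)
  finally have "(a/b)^(2^1) = (c^(2^s))^(2^1)" by (simp only: power_one_right)
  hence "a/b = c^(2^s)" by (rule c2_pow_inj[OF two])
  thus ?thesis by (rule sym)
qed




lemma iv_core:
  fixes ti tj :: "'a::field" assumes two: "(2::'a) = 0" and r: "r = Suc s"
    and ri: "poly (trP r) ti^2 + poly (trP l) ti^(2^r) * poly (trP s) ti^2 = 0"
    and rj: "poly (trP r) tj^2 + poly (trP l) tj^(2^r) * poly (trP s) tj^2 = 0"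
    and bi: "poly (trP s) ti \<noteq> 0" and bj: "poly (trP s) tj \<noteq> 0"
    and ne: "ti \<noteq> tj" and pl: "poly (trP l) (ti+tj) = 0"
  shows "poly (trP s) (ti+tj) \<noteq> 0 \<and>
       poly (trP l) ti ^ (2 ^ s) = poly (trP r) ti / poly (trP s) ti \<and>
       poly (trP r) ti / poly (trP s) ti =
         poly (trP r) (ti + tj) / poly (trP s) (ti + tj) \<and>
       poly (trP r) (ti + tj) / poly (trP s) (ti + tj) =
         poly (trP r) tj / poly (trP s) tj \<and>
       poly (trP r) tj / poly (trP s) tj = poly (trP l) tj ^ (2 ^ s)"
proof -
  define ai where "ai = poly (trP r) ti"
  define aj where "aj = poly (trP r) tj"
  define a where "a = poly (trP r) (ti+tj)"
  define b1 where "b1 = poly (trP s) ti"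
  define b2 where "b2 = poly (trP s) tj"
  define b where "b = poly (trP s) (ti+tj)"
  define ci where "ci = poly (trP l) ti"
  define cj where "cj = poly (trP l) tj"
  have qi: "ci^(2^s) = ai / b1"
    using root_ratio[OF two _ bi, of "poly (trP r) ti" "poly (trP l) ti"] ri
    unfolding r ai_def b1_def ci_def by simp
  have qj: "cj^(2^s) = aj / b2"
    using root_ratio[OF two _ bj, of "poly (trP r) tj" "poly (trP l) tj"] rj
    unfolding r aj_def b2_def cj_def by simp
  have "ci + cj = 0" using pl trP_add[OF two, of l ti tj] unfolding ci_def cj_def by simp
  hence cij: "ci = cj" using c2_neg[OF two] by (metis add_eq_0_iff2)
  define q where "q = ci^(2^s)"
  have b1n: "b1 \<noteq> 0" using bi b1_def by simp
  have b2n: "b2 \<noteq> 0" using bj b2_def by simp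
  have ai': "ai = q * b1" using qi b1n unfolding q_def by (simp add: field_simps)
  have aj': "aj = q * b2" using qj b2n cij unfolding q_def by (simp add: field_simps)
  have asum: "a = ai + aj" unfolding a_def ai_def aj_def by (rule trP_add[OF two])
  have bsum: "b = b1 + b2" unfolding b_def b1_def b2_def by (rule trP_add[OF two])
  have ab: "a = q * b" unfolding asum bsum ai' aj' by (simp add: algebra_simps)
  have bn: "b \<noteq> 0"
  proof
    assume b0: "b = 0"
    hence a0: "a = 0" using ab by simp
    have "a = b + (ti+tj)^(2^s)" unfolding a_def b_def r by (rule trP_Suc)
    hence "(ti+tj)^(2^s) = 0" using a0 b0 by simp
    hence "ti + tj = 0" by simp
    hence "ti = tj" using c2_neg[OF two] by (metis add_eq_0_iff2)
    thus False using ne by simp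
  qed
  have "a / b = q" using ab bn by simp
  thus ?thesis using bn qi qj cij
    unfolding q_def a_def b_def ai_def aj_def b1_def b2_def ci_def cj_def by simp
qed


lemma poly_pdX0: "poly (pderiv (([:0,1:]::bit poly)^n)) 0 = (if n = 1 then 1 else 0)"
proof -
  have px: "pderiv ([:0,1:]::bit poly) = 1" by (simp add: pderiv_pCons one_pCons)
  have "poly (pderiv (([:0,1:]::bit poly)^n)) 0 = of_nat n * 0^(n-1)"
    by (simp add: pderiv_power px)
  moreover have "(of_nat n * 0^(n-1) :: bit) = (if n = 1 then 1 else 0)"
  proof (cases n)
    case 0 then show ?thesis by simp
  next
    case (Suc k) then show ?thesis by (cases k) simp_all
  qed
  ultimately show ?thesis by simp
qed

lemma pow2_m1_eq1: "((2::nat)^k - 1 = 1) = (k = 1)"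
proof
  assume "2^k - 1 = (1::nat)"
  hence "(2::nat)^k = 2^1" by simp
  thus "k = 1" using power_inject_exp[of "2::nat" k 1] by simp
qed simp

lemma poly_pd0:
  fixes r l :: nat assumes "r \<ge> 2"
  shows "poly (pderiv (monom (1::bit) (2 ^ r - 1) +
       (1 + (\<Sum>k\<in>{r..<r + l}. monom 1 (2 ^ k))) * (\<Sum>k<r. monom 1 (2 ^ k - 1)))) 0 = 1"
proof -
  define x :: "bit poly" where "x = [:0,1:]"
  define T where "T = (\<Sum>k\<in>{r..<r + l}. x^(2^k))"
  define S where "S = (\<Sum>k<r. x^(2^k-1))"
  have Q: "monom 1 (2 ^ r - 1) + (1 + (\<Sum>k\<in>{r..<r + l}. monom 1 (2 ^ k))) * (\<Sum>k<r. monom 1 (2 ^ k - 1))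
      = x^(2^r-1) + (1 + T) * S" unfolding T_def S_def x_def by (simp add: monom1)
  have dT: "pderiv T = 0" unfolding T_def pderiv_sum
  proof (intro sum.neutral ballI)
    fix k assume "k \<in> {r..<r+l}"
    hence "k \<ge> 1" using assms by simp
    thus "pderiv (x^(2^k)) = 0" unfolding x_def by (rule pd_X2k)
  qed
  have r4: "(2::nat)^r \<ge> 2^2" using assms by (rule power_increasing) simp
  have A: "poly (pderiv (x^(2^r-1))) 0 = 0"
  proof -
    have "2^r - 1 \<noteq> (1::nat)" using r4 by simp
    thus ?thesis unfolding x_def poly_pdX0 by simp
  qed
  have B: "poly (1 + T) 0 = 1" unfolding T_def by (simp add: poly_sum x_def)
  have C: "poly (pderiv S) 0 = 1"
  proof -
    have "poly (pderiv S) 0 = (\<Sum>k<r. if k = 1 then 1 else 0)"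
      unfolding S_def pderiv_sum poly_sum x_def poly_pdX0 pow2_m1_eq1 ..
    also have "\<dots> = 1" using assms by simp
    finally show ?thesis .
  qed
  have "pderiv (x^(2^r-1) + (1 + T) * S) = pderiv (x^(2^r-1)) + (1 + T) * pderiv S + S * pderiv T"
    by (simp add: pderiv_add pderiv_mult)
  thus ?thesis unfolding Q using A B C dT by (simp add: poly_mult)
qed

lemma root_eq:
  fixes r l :: nat and t :: "bit alg_closure" assumes "r \<ge> 1"
    and "poly (map_poly to_ac (pderiv (L1 (2^r*(2^l+1))))) t = 0"
  shows "poly (trP r) t^2 + poly (trP l) t^(2^r) * poly (trP (r-1)) t^2 = 0"
proof -
  have "monom 1 2 * pderiv (L1 (2^r*(2^l+1))) = trP r ^ 2 + trP l ^ (2 ^ r) * (trP (r - 1) ^ 2 :: bit poly)"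
    unfolding L1_eq[OF assms(1)] by (rule part2[OF assms(1)])
  hence "map_poly to_ac (monom 1 2 * pderiv (L1 (2^r*(2^l+1)))) = map_poly to_ac (trP r ^ 2 + trP l ^ (2 ^ r) * (trP (r - 1) ^ 2 :: bit poly))"
    by simp
  hence "monom 1 2 * map_poly to_ac (pderiv (L1 (2^r*(2^l+1)))) = trP r ^ 2 + trP l ^ (2 ^ r) * (trP (r - 1) ^ 2 :: bit alg_closure poly)"
    by (simp only: mp_mult mp_add mp_pow mp_trP mp_monom)
  hence "poly (monom 1 2 * map_poly to_ac (pderiv (L1 (2^r*(2^l+1))))) t = poly (trP r ^ 2 + trP l ^ (2 ^ r) * (trP (r - 1) ^ 2 :: bit alg_closure poly)) t"
    by simp
  thus ?thesis using assms(2) by (simp add: poly_mult poly_monom)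
qed

lemma not_root0:
  fixes r l :: nat assumes "r \<ge> 2"
  shows "poly (map_poly to_ac (pderiv (L1 (2^r*(2^l+1))))) (0::bit alg_closure) \<noteq> 0"
proof -
  have "poly (pderiv (L1 (2^r*(2^l+1)))) 0 = 1"
    using L1_eq[of r l] poly_pd0[OF assms, of l] assms by simp
  thus ?thesis by (simp add: poly_0_coeff_0 coeff_map_poly)
qed

theorem lemma3p3:
  fixes r l m :: nat
  assumes "r \<ge> 2" and "l \<ge> 1" and "m = 2 ^ r * (2 ^ l + 1)"
  shows
    "L1 m = monom 1 (2 ^ r - 1) +
       (1 + (\<Sum>k\<in>{r..<r + l}. monom 1 (2 ^ k))) * (\<Sum>k<r. monom 1 (2 ^ k - 1))
   \<and>
    monom 1 2 * pderiv (L1 m) = trP r ^ 2 + trP l ^ (2 ^ r) * trP (r - 1) ^ 2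
   \<and>
    (\<forall>\<tau> :: bit alg_closure. poly (map_poly to_ac (pderiv (L1 m))) \<tau> = 0 \<longrightarrow>
       poly (trP (r - 1)) \<tau> \<noteq> 0)
   \<and>
    (\<forall>\<tau>i \<tau>j :: bit alg_closure.
       poly (map_poly to_ac (pderiv (L1 m))) \<tau>i = 0 \<longrightarrow>
       poly (map_poly to_ac (pderiv (L1 m))) \<tau>j = 0 \<longrightarrow>
       \<tau>i \<noteq> \<tau>j \<longrightarrow> poly (trP l) (\<tau>i + \<tau>j) = 0 \<longrightarrow>
       poly (trP (r - 1)) (\<tau>i + \<tau>j) \<noteq> 0 \<and>
       poly (trP l) \<tau>i ^ (2 ^ (r - 1)) = poly (trP r) \<tau>i / poly (trP (r - 1)) \<tau>i \<and>
       poly (trP r) \<tau>i / poly (trP (r - 1)) \<tau>i =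
         poly (trP r) (\<tau>i + \<tau>j) / poly (trP (r - 1)) (\<tau>i + \<tau>j) \<and>
       poly (trP r) (\<tau>i + \<tau>j) / poly (trP (r - 1)) (\<tau>i + \<tau>j) =
         poly (trP r) \<tau>j / poly (trP (r - 1)) \<tau>j \<and>
       poly (trP r) \<tau>j / poly (trP (r - 1)) \<tau>j = poly (trP l) \<tau>j ^ (2 ^ (r - 1)))"
proof -
  have r1: "r \<ge> 1" using assms(1) by simp
  obtain s where r: "r = Suc s" using r1 by (cases r) auto
  have rs: "r - 1 = s" using r by simp
  have i: "L1 m = monom 1 (2 ^ r - 1) +
       (1 + (\<Sum>k\<in>{r..<r + l}. monom 1 (2 ^ k))) * (\<Sum>k<r. monom 1 (2 ^ k - 1))"
    unfolding assms(3) by (rule L1_eq[OF r1])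
  have ii: "monom 1 2 * pderiv (L1 m) = trP r ^ 2 + trP l ^ (2 ^ r) * trP (r - 1) ^ 2"
    unfolding i by (rule part2[OF r1])
  have iii: "poly (trP (r - 1)) t \<noteq> 0"
    if rt: "poly (map_poly to_ac (pderiv (L1 m))) t = 0" for t :: "bit alg_closure"
  proof
    assume b0: "poly (trP (r - 1)) t = 0"
    have eq: "poly (trP r) t^2 + poly (trP l) t^(2^r) * poly (trP (r-1)) t^2 = 0"
      using root_eq[OF r1, of l t] rt unfolding assms(3) by simp
    hence "poly (trP r) t = 0" using b0 by simp
    moreover have "poly (trP r) t = poly (trP (r-1)) t + t^(2^s)" unfolding rs unfolding r by (rule trP_Suc)
    ultimately have "t^(2^s) = 0" using b0 by simp
    hence "t = 0" by simp
    thus False using rt not_root0[OF assms(1), of l] unfolding assms(3) by simp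
  qed
  have iv: "poly (trP (r - 1)) (ti + tj) \<noteq> 0 \<and>
       poly (trP l) ti ^ (2 ^ (r - 1)) = poly (trP r) ti / poly (trP (r - 1)) ti \<and>
       poly (trP r) ti / poly (trP (r - 1)) ti =
         poly (trP r) (ti + tj) / poly (trP (r - 1)) (ti + tj) \<and>
       poly (trP r) (ti + tj) / poly (trP (r - 1)) (ti + tj) =
         poly (trP r) tj / poly (trP (r - 1)) tj \<and>
       poly (trP r) tj / poly (trP (r - 1)) tj = poly (trP l) tj ^ (2 ^ (r - 1))"
    if ri: "poly (map_poly to_ac (pderiv (L1 m))) ti = 0"
      and rj: "poly (map_poly to_ac (pderiv (L1 m))) tj = 0"
      and ne: "ti \<noteq> tj" and pl: "poly (trP l) (ti + tj) = 0" for ti tj :: "bit alg_closure"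
  proof -
    have ei: "poly (trP r) ti^2 + poly (trP l) ti^(2^r) * poly (trP s) ti^2 = 0"
      using root_eq[OF r1, of l ti] ri unfolding assms(3) rs by simp
    have ej: "poly (trP r) tj^2 + poly (trP l) tj^(2^r) * poly (trP s) tj^2 = 0"
      using root_eq[OF r1, of l tj] rj unfolding assms(3) rs by simp
    have bi: "poly (trP s) ti \<noteq> 0" using iii[OF ri] unfolding rs .
    have bj: "poly (trP s) tj \<noteq> 0" using iii[OF rj] unfolding rs .
    show ?thesis unfolding rs by (rule iv_core[OF two_ac r ei ej bi bj ne pl])
  qed
  show ?thesis using i ii iii iv by blast
qed

end
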